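(* Consider the scalar system $\dot x=u+ax^2$, where $x,u\in\mathbb{R}$ and $a$ is an unknown constant. Let $\lambda>0$, $k>0$, $\gamma_a>0$, $\mu(t)=e^{\lambda t}$ and $s=\mu(t)x$. Apply the controller $$u=-(k+\lambda)x-\hat a x^2,\qquad \dot{\hat a}=\gamma_a\,\mu\, s\, x^2.$$ Then, for all initial conditions $x(0)$ and $\hat a(0)$: 1. $V=\tfrac12 s^2+\tfrac1{2\gamma_a}(a-\hat a)^2$ satisfies $\dot V=-ks^2$. 2. $s$, $\hat a$, $x$ and $u$ are bounded, and $|x(t)|\le C e^{-\lambda t}$ for some constant $C$ depending on the initial conditions. 3. $\lim_{t\to\infty}\hat a(t)$ exists. *)

theory Defs
  imports Complex_Main
begin

definition mu :: "real \<Rightarrow> real \<Rightarrow> real" where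
  "mu lam t = exp (lam * t)"

definition ctrl :: "real \<Rightarrow> real \<Rightarrow> real \<Rightarrow> real \<Rightarrow> real" where
  "ctrl k lam xv ahv = - (k + lam) * xv - ahv * xv ^ 2"

definition closed_loop_solution ::
  "real \<Rightarrow> real \<Rightarrow> real \<Rightarrow> real \<Rightarrow> (real \<Rightarrow> real) \<Rightarrow> (real \<Rightarrow> real) \<Rightarrow> bool" where
  "closed_loop_solution a lam k gam x ah \<longleftrightarrow>
     (\<forall>t\<ge>0. (x has_real_derivative (ctrl k lam (x t) (ah t) + a * (x t)^2)) (at t within {0..})) \<and>
     (\<forall>t\<ge>0. (ah has_real_derivative
                 (gam * mu lam t * (mu lam t * x t) * (x t)^2)) (at t within {0..}))"

end

theory Submission
  imports Defs
begin

lemma dec_lemma: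
  fixes f f' :: "real \<Rightarrow> real"
  assumes d: "\<forall>t\<ge>0. (f has_real_derivative f' t) (at t within {0..})"
    and n: "\<forall>t\<ge>0. f' t \<le> 0" and "0 \<le> t1" "t1 \<le> t2"
  shows "f t2 \<le> f t1"
proof (rule DERIV_nonpos_imp_decreasing_open[OF \<open>t1 \<le> t2\<close>])
  fix y assume y: "t1 < y" "y < t2"
  hence "(f has_real_derivative f' y) (at y within {0<..})"
    using d assms(3) by (meson has_field_derivative_subset greaterThan_iff atLeast_iff
        less_eq_real_def order.strict_trans1 subsetI)
  hence "DERIV f y :> f' y" using y assms(3)
    by (metis at_within_open greaterThan_iff open_greaterThan order.strict_trans1)
  thus "\<exists>z. DERIV f y :> z \<and> z \<le> 0" using n y assms(3) by auto
next
  have "continuous_on {0..} f"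
    using d by (metis DERIV_continuous atLeast_iff continuous_on_eq_continuous_within)
  thus "continuous_on {t1..t2} f"
    by (rule continuous_on_subset) (use assms(3) in auto)
qed

theorem mainTheorem3:
  fixes a lam k gam :: real and x ah :: "real \<Rightarrow> real"
  assumes "lam > 0" and "k > 0" and "gam > 0"
    and "closed_loop_solution a lam k gam x ah"
  defines "s \<equiv> (\<lambda>t. mu lam t * x t)"
    and "u \<equiv> (\<lambda>t. ctrl k lam (x t) (ah t))"
    and "V \<equiv> (\<lambda>t. (1/2) * (mu lam t * x t)^2 + (1 / (2 * gam)) * (a - ah t)^2)"
  shows "(\<forall>t\<ge>0. (V has_real_derivative (- k * (s t)^2)) (at t within {0..}))
    \<and> (\<exists>B. \<forall>t\<ge>0. \<bar>s t\<bar> \<le> B)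
    \<and> (\<exists>B. \<forall>t\<ge>0. \<bar>ah t\<bar> \<le> B)
    \<and> (\<exists>B. \<forall>t\<ge>0. \<bar>x t\<bar> \<le> B)
    \<and> (\<exists>B. \<forall>t\<ge>0. \<bar>u t\<bar> \<le> B)
    \<and> (\<exists>C. \<forall>t\<ge>0. \<bar>x t\<bar> \<le> C * exp (- lam * t))
    \<and> (\<exists>L. (ah \<longlongrightarrow> L) at_top)"
proof -
  have dx: "\<And>t. t \<ge> 0 \<Longrightarrow> (x has_real_derivative (ctrl k lam (x t) (ah t) + a * (x t)^2)) (at t within {0..})"
   and dah: "\<And>t. t \<ge> 0 \<Longrightarrow> (ah has_real_derivative
                 (gam * mu lam t * (mu lam t * x t) * (x t)^2)) (at t within {0..})"
    using assms(4) unfolding closed_loop_solution_def by auto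
  have dmu: "\<And>t. ((mu lam) has_real_derivative (lam * mu lam t)) (at t within {0..})"
    unfolding mu_def by (auto intro!: derivative_eq_intros)
  have dV: "(V has_real_derivative (- k * (s t)^2)) (at t within {0..})" if t: "t \<ge> 0" for t
  proof -
    have ds: "((\<lambda>t. mu lam t * x t) has_real_derivative
        (lam * mu lam t * x t + mu lam t * (ctrl k lam (x t) (ah t) + a * (x t)^2))) (at t within {0..})"
      using DERIV_mult[OF dmu dx[OF t]] by (simp add: algebra_simps)
    have d1: "((\<lambda>t. (1/2) * (mu lam t * x t)^2) has_real_derivative
        (mu lam t * x t) * (lam * mu lam t * x t + mu lam t * (ctrl k lam (x t) (ah t) + a * (x t)^2))) (at t within {0..})"
      using DERIV_cmult[OF DERIV_power[OF ds, of 2], of "1/2"] by (simp add: mult.commute)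
    have d2: "((\<lambda>t. (1 / (2 * gam)) * (a - ah t)^2) has_real_derivative
        (1 / (2 * gam)) * (2 * (a - ah t) * (- (gam * mu lam t * (mu lam t * x t) * (x t)^2)))) (at t within {0..})"
      using DERIV_cmult[OF DERIV_power[OF DERIV_diff[OF DERIV_const dah[OF t]], where n=2], of "1 / (2 * gam)"]
      by (rule DERIV_cong) (simp add: algebra_simps)
    have e: "(mu lam t * x t) * (lam * mu lam t * x t + mu lam t * (ctrl k lam (x t) (ah t) + a * (x t)^2))
       + (1 / (2 * gam)) * (2 * (a - ah t) * (- (gam * mu lam t * (mu lam t * x t) * (x t)^2))) = - k * (s t)^2"
      using assms(3) unfolding s_def ctrl_def by (simp add: field_simps power2_eq_square)
    show ?thesis unfolding V_def using DERIV_add[OF d1 d2] e by simp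
  qed
  have Vle: "V t \<le> V 0" if "t \<ge> 0" for t
    by (rule dec_lemma[OF _ _ order.refl that]) (use dV assms(2) in auto)
  define B where "B = sqrt (2 * V 0)"
  have mupos: "mu lam t \<ge> 1" if "t \<ge> 0" for t
    unfolding mu_def using assms(1) that by simp
  have sB: "\<bar>s t\<bar> \<le> B" if t: "t \<ge> 0" for t
  proof -
    have "0 \<le> (1/(2*gam))*(a-ah t)^2" using assms(3) by simp
    moreover have "V t = 1/2 * (s t)^2 + (1/(2*gam))*(a-ah t)^2" unfolding V_def s_def by simp
    ultimately have "(s t)^2 \<le> 2 * V 0" using Vle[OF t] by linarith
    hence "sqrt ((s t)^2) \<le> B" unfolding B_def by (rule real_sqrt_le_mono)
    thus ?thesis by simp
  qed
  have B0: "B \<ge> 0" using sB[of 0] by simp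
  define A where "A = sqrt (2 * gam * V 0)"
  have ahB: "\<bar>ah t\<bar> \<le> \<bar>a\<bar> + A" if t: "t \<ge> 0" for t
  proof -
    have "0 \<le> (1/2) * (mu lam t * x t)^2" by simp
    moreover have "V t = 1/2 * (mu lam t * x t)^2 + (1/(2*gam))*(a-ah t)^2" unfolding V_def by simp
    ultimately have "(1 / (2 * gam)) * (a - ah t)^2 \<le> V 0" using Vle[OF t] by linarith
    hence "(a - ah t)^2 \<le> 2 * gam * V 0" using assms(3) by (simp add: field_simps)
    hence "sqrt ((a - ah t)^2) \<le> A" unfolding A_def by (rule real_sqrt_le_mono)
    hence "\<bar>a - ah t\<bar> \<le> A" by simp
    thus ?thesis by linarith
  qed
  have xs: "\<bar>x t\<bar> = \<bar>s t\<bar> * exp (- lam * t)" for t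
    unfolding s_def mu_def by (simp add: abs_mult exp_minus field_simps)
  have xexp: "\<bar>x t\<bar> \<le> B * exp (- lam * t)" if "t \<ge> 0" for t
    using xs[of t] sB[OF that] by (simp add: mult_right_mono)
  have xB: "\<bar>x t\<bar> \<le> B" if t: "t \<ge> 0" for t
  proof -
    have "exp (- lam * t) \<le> 1" using assms(1) t by simp
    hence "B * exp (- lam * t) \<le> B" using B0 by (rule mult_left_le)
    thus ?thesis using xexp[OF t] by linarith
  qed
  have uB: "\<bar>u t\<bar> \<le> (k + lam) * B + (\<bar>a\<bar> + A) * B^2" if t: "t \<ge> 0" for t
  proof -
    have "\<bar>u t\<bar> \<le> (k + lam) * \<bar>x t\<bar> + \<bar>ah t\<bar> * (x t)^2"
    proof -
      have "\<bar>u t\<bar> \<le> \<bar>(k + lam) * x t\<bar> + \<bar>ah t * (x t)^2\<bar>"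
        unfolding u_def ctrl_def using abs_triangle_ineq4[of "- (k + lam) * x t" "ah t * (x t)^2"]
        by (simp only: abs_minus_cancel minus_mult_left)
      moreover have "\<bar>(k + lam) * x t\<bar> = (k + lam) * \<bar>x t\<bar>" using assms(1,2) by (simp add: abs_mult)
      moreover have "\<bar>ah t * (x t)^2\<bar> = \<bar>ah t\<bar> * (x t)^2" by (simp add: abs_mult)
      ultimately show ?thesis by simp
    qed
    also have "\<dots> \<le> (k + lam) * B + (\<bar>a\<bar> + A) * B^2"
    proof (rule add_mono)
      show "(k + lam) * \<bar>x t\<bar> \<le> (k + lam) * B" using xB[OF t] assms(1,2) by simp
      have "\<bar>x t\<bar>^2 \<le> B^2" using xB[OF t] by (intro power_mono) auto
      hence "(x t)^2 \<le> B^2" by simp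
      thus "\<bar>ah t\<bar> * (x t)^2 \<le> (\<bar>a\<bar> + A) * B^2" using ahB[OF t] by (simp add: mult_mono)
    qed
    finally show ?thesis .
  qed
  define c where "c = gam * B^3 / lam"
  define g where "g = (\<lambda>t. ah t + c * exp (- lam * t))"
  have dah_bound: "gam * mu lam t * (mu lam t * x t) * (x t)^2 \<le> gam * B^3 * exp (- lam * t)" if t: "t \<ge> 0" for t
  proof -
    have eq: "gam * mu lam t * (mu lam t * x t) * (x t)^2 = gam * (s t)^3 * exp (- lam * t)"
      unfolding s_def mu_def by (simp add: exp_minus field_simps power3_eq_cube power2_eq_square)
    have "(s t)^3 \<le> B^3" using sB[OF t]
    proof -
      have "\<bar>s t\<bar>^3 \<le> B^3" using sB[OF t] by (intro power_mono) auto
      thus ?thesis by (metis abs_ge_self order_trans power_abs)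
    qed
    thus ?thesis unfolding eq using assms(3) by (simp add: mult_right_mono)
  qed
  have dg: "(g has_real_derivative (gam * mu lam t * (mu lam t * x t) * (x t)^2 - gam * B^3 * exp (- lam * t))) (at t within {0..})"
    if t: "t \<ge> 0" for t
  proof -
    have "(g has_real_derivative (gam * mu lam t * (mu lam t * x t) * (x t)^2 + c * (exp (- lam * t) * (- lam)))) (at t within {0..})"
      unfolding g_def by (rule derivative_eq_intros dah[OF t] refl | simp)+
    moreover have "c * (exp (- lam * t) * (- lam)) = - (gam * B^3 * exp (- lam * t))"
      unfolding c_def using assms(1) by simp
    ultimately show ?thesis by (metis diff_conv_add_uminus)
  qed
  have gdec: "g t2 \<le> g t1" if "0 \<le> t1" "t1 \<le> t2" for t1 t2
    by (rule dec_lemma[OF _ _ that]) (use dg dah_bound in auto)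
  have glow: "g t \<ge> - (\<bar>a\<bar> + A)" if "t \<ge> 0" for t
  proof -
    have "c \<ge> 0" unfolding c_def using assms B0 by simp
    hence "0 \<le> c * exp (- lam * t)" by simp
    thus ?thesis unfolding g_def using ahB[OF that] by linarith
  qed
  define L where "L = Inf (g ` {0..})"
  have bdd: "bdd_below (g ` {0..})" using glow by (auto intro!: bdd_belowI[where m="- (\<bar>a\<bar> + A)"])
  have gL: "(g \<longlongrightarrow> L) at_top"
  proof (rule tendstoI)
    fix e :: real assume e: "e > 0"
    have "\<exists>y\<in>g ` {0..}. y < L + e"
      unfolding L_def by (rule cInf_lessD) (use e in auto)
    then obtain t0 where t0: "t0 \<ge> 0" "g t0 < L + e" by auto
    show "\<forall>\<^sub>F t in at_top. dist (g t) L < e"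
      unfolding eventually_at_top_linorder
    proof (intro exI allI impI)
      fix t assume "t \<ge> t0"
      hence "g t \<le> g t0" "L \<le> g t" using gdec t0 bdd unfolding L_def
        by (auto intro!: cInf_lower)
      thus "dist (g t) L < e" using t0 e by (simp add: dist_real_def)
    qed
  qed
  have ex0: "((\<lambda>t. exp (- lam * t)) \<longlongrightarrow> 0) at_top"
  proof -
    have "filterlim (\<lambda>t. - lam * t) at_bot at_top"
      using assms(1) by (intro filterlim_tendsto_neg_mult_at_bot[OF tendsto_const]) (auto simp: filterlim_ident)
    thus ?thesis by (rule filterlim_compose[OF exp_at_bot])
  qed
  have "((\<lambda>t. g t - c * exp (- lam * t)) \<longlongrightarrow> L - c * 0) at_top"
    by (intro tendsto_intros gL ex0)
  hence ahL: "(ah \<longlongrightarrow> L) at_top" unfolding g_def by simp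
  show ?thesis
    using dV sB ahB xB uB xexp ahL by blast
qed

end
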